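(* Let $G=(V,E)$ be a graph and $v\in V$. Then $v\in \mathrm{anticore}(G)$ if and only if $\gamma(G_v+u)=\gamma(G)+1$.
   Context: All graphs are finite, simple and undirected. A set $S\subseteq V$ is dominating if every vertex of $V$ is in $S$ or adjacent to a vertex of $S$; $\gamma(G)$ is the minimum size of a dominating set, and a minimum dominating set (mds, or $\gamma$-set) is a dominating set of size $\gamma(G)$. $\mathrm{core}(G)$ is the set of vertices belonging to every mds of $G$, $\mathrm{corona}(G)$ is the set of vertices belonging to at least one mds of $G$, and $\mathrm{anticore}(G)=V\setminus \mathrm{corona}(G)$. For $v\in V$, $G_v+u$ denotes the graph obtained from $G$ by adding one new vertex $u$ and the single edge $uv$. *)

theory Defs
  imports Main
begin

definition graph :: "'a set \<Rightarrow> 'a set set \<Rightarrow> bool" where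
  "graph V E \<longleftrightarrow> finite V \<and> (\<forall>e\<in>E. \<exists>x y. x \<in> V \<and> y \<in> V \<and> x \<noteq> y \<and> e = {x, y})"

definition adjacent :: "'a set set \<Rightarrow> 'a \<Rightarrow> 'a \<Rightarrow> bool" where
  "adjacent E x y \<longleftrightarrow> {x, y} \<in> E"

definition dominating :: "'a set \<Rightarrow> 'a set set \<Rightarrow> 'a set \<Rightarrow> bool" where
  "dominating V E S \<longleftrightarrow> S \<subseteq> V \<and> (\<forall>w\<in>V. w \<in> S \<or> (\<exists>s\<in>S. adjacent E w s))"

definition domination_number :: "'a set \<Rightarrow> 'a set set \<Rightarrow> nat" where
  "domination_number V E = Min (card ` {S. dominating V E S})"

definition mds :: "'a set \<Rightarrow> 'a set set \<Rightarrow> 'a set \<Rightarrow> bool" where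
  "mds V E S \<longleftrightarrow> dominating V E S \<and> card S = domination_number V E"

definition corona :: "'a set \<Rightarrow> 'a set set \<Rightarrow> 'a set" where
  "corona V E = {x \<in> V. \<exists>S. mds V E S \<and> x \<in> S}"

definition anticore :: "'a set \<Rightarrow> 'a set set \<Rightarrow> 'a set" where
  "anticore V E = V - corona V E"

end

theory Submission
  imports Defs
begin

lemma edge_in_V:
  assumes "graph V E" "{x, y} \<in> E" shows "x \<in> V"
proof -
  obtain a b where "a \<in> V" "b \<in> V" "{x,y} = {a,b}" using assms unfolding graph_def by blast
  then show ?thesis by (metis insertCI insertE singletonD)
qed

lemma dom_ge:
  assumes "finite V" "dominating V E S" shows "domination_number V E \<le> card S"
proof -
  have "{S. dominating V E S} \<subseteq> Pow V" by (auto simp: dominating_def)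
  hence "finite (card ` {S. dominating V E S})" using assms(1)
    by (meson finite_Pow_iff finite_imageI finite_subset)
  thus ?thesis unfolding domination_number_def using assms(2) by auto
qed

lemma mds_ex:
  assumes "finite V" shows "\<exists>S. mds V E S"
proof -
  have "{S. dominating V E S} \<subseteq> Pow V" by (auto simp: dominating_def)
  hence f: "finite (card ` {S. dominating V E S})" using assms(1)
    by (meson finite_Pow_iff finite_imageI finite_subset)
  have "dominating V E V" by (auto simp: dominating_def)
  hence "card ` {S. dominating V E S} \<noteq> {}" by auto
  from Min_in[OF f this] show ?thesis unfolding mds_def domination_number_def by auto
qed

lemma dom_finite: "finite V \<Longrightarrow> dominating V E S \<Longrightarrow> finite S"
  by (auto simp: dominating_def intro: finite_subset)

lemma lemA:
  assumes "dominating V E S" "v \<in> S"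
  shows "dominating (insert u V) (insert {u,v} E) S"
  using assms unfolding dominating_def adjacent_def by blast

lemma lemA2:
  assumes "dominating V E S"
  shows "dominating (insert u V) (insert {u,v} E) (insert u S)"
  using assms unfolding dominating_def adjacent_def by blast

lemma lemB:
  assumes g: "graph V E" and "u \<notin> V" and d: "dominating (insert u V) (insert {u,v} E) D" and "u \<notin> D"
  shows "v \<in> D \<and> dominating V E D"
proof -
  have uV: "\<And>y. {u, y} \<notin> E" using edge_in_V[OF g] assms(2) by blast
  have uV2: "\<And>y. {y, u} \<notin> E" using uV by (metis insert_commute)
  obtain s where s: "s \<in> D" "{u,s} \<in> insert {u,v} E"
    using d assms(4) unfolding dominating_def adjacent_def by blast
  have "s \<noteq> u" using s assms(4) by auto
  hence "s = v" using s uV by (auto simp: doubleton_eq_iff)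
  moreover have "dominating V E D"
    unfolding dominating_def adjacent_def
  proof (intro conjI ballI)
    show "D \<subseteq> V" using d assms(4) by (auto simp: dominating_def)
  next
    fix w assume w: "w \<in> V"
    show "w \<in> D \<or> (\<exists>s\<in>D. {w, s} \<in> E)"
    proof (cases "w \<in> D")
      case False
      then obtain t where t: "t \<in> D" "{w,t} \<in> insert {u,v} E"
        using d w unfolding dominating_def adjacent_def by blast
      have "t \<noteq> u" using t assms(4) by auto
      have "w \<noteq> u" using w assms(2) by auto
      hence "{w,t} \<noteq> {u,v}" using \<open>t \<noteq> u\<close> by (auto simp: doubleton_eq_iff)
      thus ?thesis using t by auto
    qed auto
  qed
  ultimately show ?thesis using s by auto
qed

lemma lemC:
  assumes g: "graph V E" and "u \<notin> V" and "v \<in> V" and d: "dominating (insert u V) (insert {u,v} E) D" and "u \<in> D"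
  shows "dominating V E (insert v (D - {u}))"
proof -
  have uV: "\<And>y. {u, y} \<notin> E" using edge_in_V[OF g] assms(2) by blast
  have uV2: "\<And>y. {y, u} \<notin> E" using uV by (metis insert_commute)
  show ?thesis unfolding dominating_def adjacent_def
  proof (intro conjI ballI)
    show "insert v (D - {u}) \<subseteq> V" using d assms(3) by (auto simp: dominating_def)
  next
    fix w assume w: "w \<in> V"
    have "w \<noteq> u" using w assms(2) by auto
    show "w \<in> insert v (D - {u}) \<or> (\<exists>s\<in>insert v (D - {u}). {w, s} \<in> E)"
    proof (cases "w \<in> D")
      case False
      then obtain t where t: "t \<in> D" "{w,t} \<in> insert {u,v} E"
        using d w unfolding dominating_def adjacent_def by blast
      show ?thesis
      proof (cases "{w,t} = {u,v}")
        case True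
        then show ?thesis using \<open>w \<noteq> u\<close> by (auto simp: doubleton_eq_iff)
      next
        case False
        hence "{w,t} \<in> E" using t by auto
        hence "t \<noteq> u" using uV2 by auto
        thus ?thesis using t \<open>{w,t} \<in> E\<close> by auto
      qed
    qed (use \<open>w \<noteq> u\<close> in auto)
  qed
qed

theorem theorem3:
  fixes V :: "'a set" and E :: "'a set set" and v u :: 'a
  assumes "graph V E" and "v \<in> V" and "u \<notin> V"
  shows "v \<in> anticore V E \<longleftrightarrow>
    domination_number (insert u V) (insert {u, v} E) = domination_number V E + 1"
proof -
  define V' where "V' = insert u V"
  define E' where "E' = insert {u,v} E"
  have fV: "finite V" using assms(1) by (simp add: graph_def)
  hence fV': "finite V'" by (simp add: V'_def)
  obtain S where S: "mds V E S" using mds_ex[OF fV] by blast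
  obtain D where D: "mds V' E' D" using mds_ex[OF fV'] by blast
  have fS: "finite S" using S fV dom_finite by (auto simp: mds_def)
  have fD: "finite D" using D fV' dom_finite by (auto simp: mds_def)
  have up: "domination_number V' E' \<le> domination_number V E + 1"
  proof -
    have "dominating V' E' (insert u S)" using lemA2 S by (auto simp: mds_def V'_def E'_def)
    hence "domination_number V' E' \<le> card (insert u S)" using dom_ge fV' by blast
    also have "\<dots> \<le> card S + 1" using fS by (simp add: card_insert_if)
    finally show ?thesis using S by (simp add: mds_def)
  qed
  have key: "\<exists>T. dominating V E T \<and> v \<in> T \<and> card T \<le> domination_number V' E'"
  proof (cases "u \<in> D")
    case True
    have "dominating V E (insert v (D - {u}))"
      using lemC[OF assms(1) assms(3) assms(2)] D True by (auto simp: mds_def V'_def E'_def)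
    moreover have "card (insert v (D - {u})) \<le> card D"
      using fD True card_gt_0_iff[of D] by (auto simp: card_insert_if card_Diff_singleton)
    ultimately show ?thesis using D by (auto simp: mds_def)
  next
    case False
    have "v \<in> D \<and> dominating V E D"
      using lemB[OF assms(1) assms(3)] D False by (auto simp: mds_def V'_def E'_def)
    thus ?thesis using D by (auto simp: mds_def)
  qed
  then obtain T where T: "dominating V E T" "v \<in> T" "card T \<le> domination_number V' E'" by blast
  have lo: "domination_number V E \<le> domination_number V' E'"
    using T dom_ge[OF fV T(1)] by linarith
  show ?thesis
  proof
    assume a: "v \<in> anticore V E"
    show "domination_number (insert u V) (insert {u, v} E) = domination_number V E + 1"
    proof (rule ccontr)
      assume "domination_number (insert u V) (insert {u, v} E) \<noteq> domination_number V E + 1"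
      hence "domination_number V' E' = domination_number V E" using up lo
        by (simp add: V'_def E'_def)
      hence "mds V E T" using T dom_ge[OF fV T(1)] by (simp add: mds_def)
      hence "v \<in> corona V E" using T assms(2) by (auto simp: corona_def)
      thus False using a by (simp add: anticore_def)
    qed
  next
    assume a: "domination_number (insert u V) (insert {u, v} E) = domination_number V E + 1"
    show "v \<in> anticore V E"
    proof (rule ccontr)
      assume "v \<notin> anticore V E"
      then obtain R where R: "mds V E R" "v \<in> R" using assms(2) by (auto simp: anticore_def corona_def)
      have "dominating V' E' R" using lemA R by (auto simp: mds_def V'_def E'_def)
      hence "domination_number V' E' \<le> card R" using dom_ge fV' by blast
      thus False using R a by (simp add: mds_def V'_def E'_def)
    qed
  qed
qed

end
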